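(* Let $\mu$ be a monotone system over $\{0,1\}^V$ and $\theta\in(0,1)$. Then the lifted distribution $\pi$ is a monotone system over $\{0,1,\star\}^V$, and consequently the Glauber dynamics $P_{\pi\text{-GD}}$ on $\pi$ is stochastically monotone.
   Context: Monotone system (over $\{0,1\}^V$): for every $v$ and all feasible (positive probability) $\sigma\preceq\tau$ in $\{0,1\}^{V\setminus\{v\}}$ (coordinatewise), $\mu^\sigma_v(1)\le\mu^\tau_v(1)$, $\mu^\sigma_v$ being the conditional marginal. $\mathsf{lift}:\{0,1\}^V\to\{0,1,\star\}^V$ is random: independently per coordinate, $0\mapsto0$, $1\mapsto\star$ w.p. $1-\theta$, $1\mapsto1$ w.p. $\theta$; $\pi$ is the law of $\mathsf{lift}(X)$ for $X\sim\mu$, support $\Omega(\pi)$. Order $0<1<\star$ and coordinatewise partial order on $\{0,1,\star\}^V$. A distribution $\pi$ over $\{0,1,\star\}^V$ is a monotone system if for every $i\in V$ and all feasible comparable $\sigma\preceq\tau$ in $\{0,1,\star\}^{V\setminus\{i\}}$, there is a coupling $(x,y)$ of the conditional marginals $\pi^\sigma_i,\pi^\tau_i$ with $x\le y$ a.s. $P_{\pi\text{-GD}}$: pick $v$ uniformly, resample $X_v$ from $\pi$ given $X_{V\setminus\{v\}}$. A chain $P$ on $\Omega(\pi)$ is stochastically monotone if $Pf$ is increasing for every increasing $f:\Omega(\pi)\to\mathbb R_{\ge0}$ (increasing: $X\preceq Y\Rightarrow f(X)\le f(Y)$). *)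

theory Defs
  imports "HOL-Probability.Probability"
begin

datatype tri = Zero | One | Star

fun tri_rank :: "tri \<Rightarrow> nat" where
  "tri_rank Zero = 0" | "tri_rank One = 1" | "tri_rank Star = 2"

instantiation tri :: linorder
begin
definition less_eq_tri :: "tri \<Rightarrow> tri \<Rightarrow> bool" where
  "less_eq_tri a b \<longleftrightarrow> tri_rank a \<le> tri_rank b"
definition less_tri :: "tri \<Rightarrow> tri \<Rightarrow> bool" where
  "less_tri a b \<longleftrightarrow> tri_rank a < tri_rank b"
instance
proof
  fix x y z :: tri
  show "(x < y) = (x \<le> y \<and> \<not> y \<le> x)" by (auto simp: less_eq_tri_def less_tri_def)
  show "x \<le> x" by (simp add: less_eq_tri_def)
  show "x \<le> y \<Longrightarrow> y \<le> z \<Longrightarrow> x \<le> z" by (simp add: less_eq_tri_def)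
  show "x \<le> y \<Longrightarrow> y \<le> x \<Longrightarrow> x = y"
    by (cases x; cases y; simp add: less_eq_tri_def)
  show "x \<le> y \<or> y \<le> x" by (auto simp: less_eq_tri_def)
qed
end

text \<open>A boundary condition sigma on V - {i} is represented by a full configuration whose
  value at i is ignored.\<close>

definition agree_set :: "'v \<Rightarrow> ('v \<Rightarrow> 'a) \<Rightarrow> ('v \<Rightarrow> 'a) set" where
  "agree_set i \<sigma> = {x. \<forall>u. u \<noteq> i \<longrightarrow> x u = \<sigma> u}"

definition feasible :: "('v \<Rightarrow> 'a) pmf \<Rightarrow> 'v \<Rightarrow> ('v \<Rightarrow> 'a) \<Rightarrow> bool" where
  "feasible p i \<sigma> \<longleftrightarrow> measure_pmf.prob p (agree_set i \<sigma>) > 0"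

definition cond_marg :: "('v \<Rightarrow> 'a) pmf \<Rightarrow> 'v \<Rightarrow> ('v \<Rightarrow> 'a) \<Rightarrow> 'a pmf" where
  "cond_marg p i \<sigma> = map_pmf (\<lambda>x. x i) (cond_pmf p (agree_set i \<sigma>))"

definition le_off :: "'v \<Rightarrow> ('v \<Rightarrow> 'a::order) \<Rightarrow> ('v \<Rightarrow> 'a) \<Rightarrow> bool" where
  "le_off i \<sigma> \<tau> \<longleftrightarrow> (\<forall>u. u \<noteq> i \<longrightarrow> \<sigma> u \<le> \<tau> u)"

definition monotone_system_bin :: "('v \<Rightarrow> bool) pmf \<Rightarrow> bool" where
  "monotone_system_bin \<mu> \<longleftrightarrow>
     (\<forall>v \<sigma> \<tau>. feasible \<mu> v \<sigma> \<and> feasible \<mu> v \<tau> \<and> le_off v \<sigma> \<tau> \<longrightarrow>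
        pmf (cond_marg \<mu> v \<sigma>) True \<le> pmf (cond_marg \<mu> v \<tau>) True)"

definition monotone_system_tri :: "('v \<Rightarrow> tri) pmf \<Rightarrow> bool" where
  "monotone_system_tri \<pi> \<longleftrightarrow>
     (\<forall>i \<sigma> \<tau>. feasible \<pi> i \<sigma> \<and> feasible \<pi> i \<tau> \<and> le_off i \<sigma> \<tau> \<longrightarrow>
        (\<exists>c :: (tri \<times> tri) pmf.
            map_pmf fst c = cond_marg \<pi> i \<sigma> \<and> map_pmf snd c = cond_marg \<pi> i \<tau> \<and>
            (\<forall>(x, y) \<in> set_pmf c. x \<le> y)))"

definition lift_pmf :: "real \<Rightarrow> ('v::finite \<Rightarrow> bool) \<Rightarrow> ('v \<Rightarrow> tri) pmf" where
  "lift_pmf \<theta> X = Pi_pmf UNIV Zero (\<lambda>v. if X v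
      then map_pmf (\<lambda>b. if b then One else Star) (bernoulli_pmf \<theta>)
      else return_pmf Zero)"

definition lifted :: "real \<Rightarrow> ('v::finite \<Rightarrow> bool) pmf \<Rightarrow> ('v \<Rightarrow> tri) pmf" where
  "lifted \<theta> \<mu> = bind_pmf \<mu> (lift_pmf \<theta>)"

definition glauber :: "('v::finite \<Rightarrow> 'a) pmf \<Rightarrow> ('v \<Rightarrow> 'a) \<Rightarrow> ('v \<Rightarrow> 'a) pmf" where
  "glauber \<pi> X = bind_pmf (pmf_of_set UNIV)
      (\<lambda>v. map_pmf (\<lambda>a. X(v := a)) (cond_marg \<pi> v X))"

definition stoch_monotone :: "('c::order) set \<Rightarrow> ('c \<Rightarrow> 'c pmf) \<Rightarrow> bool" where
  "stoch_monotone \<Omega> P \<longleftrightarrow>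
     (\<forall>f :: 'c \<Rightarrow> real.
        (\<forall>x\<in>\<Omega>. f x \<ge> 0) \<and> (\<forall>x\<in>\<Omega>. \<forall>y\<in>\<Omega>. x \<le> y \<longrightarrow> f x \<le> f y) \<longrightarrow>
        (\<forall>x\<in>\<Omega>. \<forall>y\<in>\<Omega>. x \<le> y \<longrightarrow>
           measure_pmf.expectation (P x) f \<le> measure_pmf.expectation (P y) f))"

end

theory Submission imports Defs begin

instance tri :: finite
proof
  have "(UNIV :: tri set) = {Zero, One, Star}" by (auto intro: tri.exhaust)
  moreover have "finite {Zero, One, Star}" by simp
  ultimately show "finite (UNIV :: tri set)" by metis
qed

definition Lf :: "bool \<Rightarrow> tri" where "Lf s = (if s then One else Star)"

definition tdist :: "real \<Rightarrow> real \<Rightarrow> tri pmf" where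
  "tdist p \<theta> = bind_pmf (bernoulli_pmf p) (\<lambda>b. bind_pmf (bernoulli_pmf \<theta>) (\<lambda>s.
      return_pmf (if b then Lf s else Zero)))"

lemma pmf_tdist:
  assumes "0 \<le> p" "p \<le> 1" "0 \<le> \<theta>" "\<theta> \<le> 1"
  shows "pmf (tdist p \<theta>) t = (case t of Zero \<Rightarrow> 1 - p | One \<Rightarrow> p * \<theta> | Star \<Rightarrow> p * (1 - \<theta>))"
  using assms by (cases t) (simp_all add: tdist_def pmf_bind Lf_def)

lemma coupling:
  assumes "0 \<le> p" "p \<le> q" "q \<le> 1" "0 \<le> \<theta>" "\<theta> \<le> 1"
  shows "\<exists>c :: (tri \<times> tri) pmf. map_pmf fst c = tdist p \<theta> \<and> map_pmf snd c = tdist q \<theta> \<and>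
            (\<forall>(x, y) \<in> set_pmf c. x \<le> y)"
proof -
  define r where "r = p / q"
  have r: "0 \<le> r" "r \<le> 1" "q * r = p"
    using assms by (cases "q = 0", auto simp: r_def divide_le_eq_1)
  define c where "c = bind_pmf (bernoulli_pmf q) (\<lambda>b. bind_pmf (bernoulli_pmf r) (\<lambda>e.
     bind_pmf (bernoulli_pmf \<theta>) (\<lambda>s. return_pmf (if b \<and> e then Lf s else Zero, if b then Lf s else Zero))))"
  have 1: "map_pmf fst c = tdist p \<theta>"
  proof (rule pmf_eqI)
    fix t
    show "pmf (map_pmf fst c) t = pmf (tdist p \<theta>) t"
      using assms r
      by (cases t) (simp_all add: pmf_tdist c_def map_bind_pmf pmf_bind Lf_def algebra_simps)
  qed
  have 2: "map_pmf snd c = tdist q \<theta>"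
  proof (rule pmf_eqI)
    fix t
    show "pmf (map_pmf snd c) t = pmf (tdist q \<theta>) t"
      using assms r
      by (cases t) (simp_all add: pmf_tdist c_def map_bind_pmf pmf_bind Lf_def algebra_simps)
  qed
  have 3: "\<forall>(x, y) \<in> set_pmf c. x \<le> y"
    by (auto simp: c_def Lf_def less_eq_tri_def)
  show ?thesis using 1 2 3 by blast
qed


definition unl :: "('v \<Rightarrow> tri) \<Rightarrow> 'v \<Rightarrow> bool" where "unl y = (\<lambda>u. y u \<noteq> Zero)"

fun cw :: "real \<Rightarrow> tri \<Rightarrow> real" where
  "cw \<theta> Zero = 1" | "cw \<theta> One = \<theta>" | "cw \<theta> Star = 1 - \<theta>"

lemma cw_pos: "0 < \<theta> \<Longrightarrow> \<theta> < 1 \<Longrightarrow> cw \<theta> t > 0"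
  by (cases t) auto

lemma pmf_coord:
  assumes "0 \<le> \<theta>" "\<theta> \<le> 1"
  shows "pmf (if b then map_pmf (\<lambda>b. if b then One else Star) (bernoulli_pmf \<theta>) else return_pmf Zero) t
     = (if b = (t \<noteq> Zero) then cw \<theta> t else 0)"
proof -
  have m: "map_pmf (\<lambda>b. if b then One else Star) (bernoulli_pmf \<theta>) =
     bind_pmf (bernoulli_pmf \<theta>) (\<lambda>b. return_pmf (if b then One else Star))"
    by (simp add: map_pmf_def)
  show ?thesis using assms by (cases b; cases t) (simp_all add: m pmf_bind)
qed

lemma pmf_lift:
  assumes "0 \<le> \<theta>" "\<theta> \<le> 1"
  shows "pmf (lift_pmf \<theta> X) y = (if X = unl y then (\<Prod>v\<in>UNIV. cw \<theta> (y v)) else 0)"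
proof -
  have "pmf (lift_pmf \<theta> X) y = (\<Prod>v\<in>UNIV. (if X v = (y v \<noteq> Zero) then cw \<theta> (y v) else 0))"
    unfolding lift_pmf_def by (simp add: pmf_Pi pmf_coord[OF assms])
  also have "\<dots> = (if X = unl y then (\<Prod>v\<in>UNIV. cw \<theta> (y v)) else 0)"
  proof (cases "X = unl y")
    case True then show ?thesis by (simp add: unl_def)
  next
    case False
    then obtain v where "X v \<noteq> (y v \<noteq> Zero)" by (auto simp: unl_def fun_eq_iff)
    then show ?thesis using False by (intro trans[OF prod_zero]) auto
  qed
  finally show ?thesis .
qed

lemma pmf_lifted:
  assumes "0 \<le> \<theta>" "\<theta> \<le> 1"
  shows "pmf (lifted \<theta> \<mu>) y = pmf \<mu> (unl y) * (\<Prod>v\<in>UNIV. cw \<theta> (y v))"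
proof -
  have "pmf (lifted \<theta> \<mu>) y = measure_pmf.expectation \<mu> (\<lambda>X. indicator {unl y} X * (\<Prod>v\<in>UNIV. cw \<theta> (y v)))"
    unfolding lifted_def pmf_bind pmf_lift[OF assms]
    by (intro Bochner_Integration.integral_cong) auto
  also have "\<dots> = pmf \<mu> (unl y) * (\<Prod>v\<in>UNIV. cw \<theta> (y v))"
    by (simp add: measure_pmf_single)
  finally show ?thesis .
qed

lemma pmf_cond_marg:
  fixes p :: "('v::finite \<Rightarrow> 'a::finite) pmf"
  assumes "feasible p i \<sigma>"
  shows "pmf (cond_marg p i \<sigma>) a = pmf p (\<sigma>(i := a)) / measure_pmf.prob p (agree_set i \<sigma>)"
proof -
  have ne: "set_pmf p \<inter> agree_set i \<sigma> \<noteq> {}"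
    using assms unfolding feasible_def by (metis measure_pmf_zero_iff disjnt_def less_irrefl)
  have s: "agree_set i \<sigma> \<inter> (\<lambda>x. x i) -` {a} = {\<sigma>(i := a)}"
    by (auto simp: agree_set_def fun_eq_iff)
  have "pmf (cond_marg p i \<sigma>) a = measure_pmf.prob (cond_pmf p (agree_set i \<sigma>)) ((\<lambda>x. x i) -` {a})"
    unfolding cond_marg_def by (simp add: pmf_map)
  also have "\<dots> = sum (pmf (cond_pmf p (agree_set i \<sigma>))) ((\<lambda>x. x i) -` {a})"
    by (rule measure_measure_pmf_finite) simp
  also have "\<dots> = sum (\<lambda>x. if x \<in> agree_set i \<sigma> then pmf p x / measure_pmf.prob p (agree_set i \<sigma>) else 0) ((\<lambda>x. x i) -` {a})"
    by (simp add: pmf_cond[OF ne])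
  also have "\<dots> = sum (\<lambda>x. pmf p x / measure_pmf.prob p (agree_set i \<sigma>)) (agree_set i \<sigma> \<inter> (\<lambda>x. x i) -` {a})"
    by (subst sum.inter_restrict[symmetric]) (simp_all add: Int_commute)
  also have "\<dots> = pmf p (\<sigma>(i := a)) / measure_pmf.prob p (agree_set i \<sigma>)"
    by (simp add: s)
  finally show ?thesis .
qed

lemma agree_tri: "agree_set i (\<sigma> :: 'v \<Rightarrow> tri) = {\<sigma>(i := Zero), \<sigma>(i := One), \<sigma>(i := Star)}"
  apply (auto simp: agree_set_def fun_eq_iff)
  by (metis tri.exhaust)

lemma agree_bool: "agree_set i (\<sigma> :: 'v \<Rightarrow> bool) = {\<sigma>(i := False), \<sigma>(i := True)}"
proof -
  have "x = \<sigma>(i := x i)" if "\<forall>u. u \<noteq> i \<longrightarrow> x u = \<sigma> u" for x :: "'v \<Rightarrow> bool"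
    using that by (auto simp: fun_eq_iff)
  then show ?thesis unfolding agree_set_def by (auto, metis (full_types))
qed


lemma cm_lifted:
  fixes \<mu> :: "('v::finite \<Rightarrow> bool) pmf"
  assumes th: "0 < \<theta>" "\<theta> < 1" and fe: "feasible (lifted \<theta> \<mu>) i \<sigma>"
  shows "feasible \<mu> i (unl \<sigma>) \<and>
         cond_marg (lifted \<theta> \<mu>) i \<sigma> = tdist (pmf (cond_marg \<mu> i (unl \<sigma>)) True) \<theta>"
proof -
  define X where "X = unl \<sigma>"
  define K where "K = (\<Prod>v\<in>UNIV - {i}. cw \<theta> (\<sigma> v))"
  define M where "M = measure_pmf.prob \<mu> (agree_set i X)"
  define D where "D = measure_pmf.prob (lifted \<theta> \<mu>) (agree_set i \<sigma>)"
  have th': "0 \<le> \<theta>" "\<theta> \<le> 1" using th by auto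
  have Kpos: "K > 0" unfolding K_def using cw_pos[OF th] by (intro prod_pos) auto
  have C: "(\<Prod>v\<in>UNIV. cw \<theta> ((\<sigma>(i:=t)) v)) = cw \<theta> t * K" for t
  proof -
    have "(\<Prod>v\<in>UNIV. cw \<theta> ((\<sigma>(i:=t)) v)) = cw \<theta> ((\<sigma>(i:=t)) i) * (\<Prod>v\<in>UNIV-{i}. cw \<theta> ((\<sigma>(i:=t)) v))"
      by (rule prod.remove) auto
    also have "(\<Prod>v\<in>UNIV-{i}. cw \<theta> ((\<sigma>(i:=t)) v)) = K"
      unfolding K_def by (rule prod.cong) auto
    finally show ?thesis by simp
  qed
  have U: "unl (\<sigma>(i:=t)) = X(i := (t \<noteq> Zero))" for t
    by (auto simp: unl_def X_def fun_eq_iff)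
  have P: "pmf (lifted \<theta> \<mu>) (\<sigma>(i:=t)) = pmf \<mu> (X(i := (t \<noteq> Zero))) * (cw \<theta> t * K)" for t
    using pmf_lifted[OF th', of \<mu> "\<sigma>(i:=t)"] C U by simp
  have Meq: "M = pmf \<mu> (X(i:=False)) + pmf \<mu> (X(i:=True))"
  proof -
    have d: "X(i:=False) \<noteq> X(i:=True)" by (auto simp: fun_eq_iff)
    show ?thesis unfolding M_def agree_bool
      by (subst measure_measure_pmf_finite) (use d in auto)
  qed
  have Deq: "D = K * M"
  proof -
    have d: "\<sigma>(i:=Zero) \<noteq> \<sigma>(i:=One)" "\<sigma>(i:=Zero) \<noteq> \<sigma>(i:=Star)" "\<sigma>(i:=One) \<noteq> \<sigma>(i:=Star)"
      by (auto simp: fun_eq_iff)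
    have "D = pmf (lifted \<theta> \<mu>) (\<sigma>(i:=Zero)) + pmf (lifted \<theta> \<mu>) (\<sigma>(i:=One))
              + pmf (lifted \<theta> \<mu>) (\<sigma>(i:=Star))"
      unfolding D_def agree_tri
      by (subst measure_measure_pmf_finite) (use d in auto)
    also have "\<dots> = K * M" unfolding P Meq by (simp add: algebra_simps)
    finally show ?thesis .
  qed
  have Dpos: "D > 0" using fe unfolding D_def feasible_def .
  have Mpos: "M > 0" using Dpos Kpos Deq by (simp add: zero_less_mult_iff)
  have feX: "feasible \<mu> i X" using Mpos unfolding feasible_def M_def .
  define p where "p = pmf (cond_marg \<mu> i X) True"
  have peq: "p = pmf \<mu> (X(i:=True)) / M"
    unfolding p_def M_def by (rule pmf_cond_marg[OF feX])
  have p01: "0 \<le> p" "p \<le> 1" using Mpos unfolding peq Meq by auto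
  have "cond_marg (lifted \<theta> \<mu>) i \<sigma> = tdist p \<theta>"
  proof (rule pmf_eqI)
    fix t
    have "pmf (cond_marg (lifted \<theta> \<mu>) i \<sigma>) t = pmf \<mu> (X(i := (t \<noteq> Zero))) * (cw \<theta> t * K) / (K * M)"
      using pmf_cond_marg[OF fe, of t] P Deq unfolding D_def by simp
    also have "\<dots> = pmf \<mu> (X(i := (t \<noteq> Zero))) * cw \<theta> t / M"
      using Kpos by (simp add: field_simps)
    also have "\<dots> = (case t of Zero \<Rightarrow> 1 - p | One \<Rightarrow> p * \<theta> | Star \<Rightarrow> p * (1 - \<theta>))"
      using Mpos unfolding peq by (cases t) (simp_all add: Meq field_simps)
    also have "\<dots> = pmf (tdist p \<theta>) t"
      by (rule pmf_tdist[OF p01 th', symmetric])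
    finally show "pmf (cond_marg (lifted \<theta> \<mu>) i \<sigma>) t = pmf (tdist p \<theta>) t" .
  qed
  then show ?thesis using feX unfolding X_def p_def by simp
qed


lemma feasible_support:
  assumes "x \<in> set_pmf p" shows "feasible p v x"
  unfolding feasible_def by (rule measure_pmf_posI[OF assms]) (simp add: agree_set_def)

lemma support_update:
  assumes "x \<in> set_pmf p" "a \<in> set_pmf (cond_marg p v x)"
  shows "x(v := a) \<in> set_pmf p"
proof -
  have ne: "set_pmf p \<inter> agree_set v x \<noteq> {}" using assms(1) by (auto simp: agree_set_def)
  from assms(2) obtain z where z: "z \<in> set_pmf p" "z \<in> agree_set v x" "a = z v"
    unfolding cond_marg_def using set_cond_pmf[OF ne] by auto
  then have "z = x(v := a)" by (auto simp: agree_set_def fun_eq_iff)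
  then show ?thesis using z by simp
qed

theorem lemma5p1:
  fixes \<mu> :: "('v::finite \<Rightarrow> bool) pmf" and \<theta> :: real
  assumes "monotone_system_bin \<mu>"
    and "0 < \<theta>" and "\<theta> < 1"
  shows "monotone_system_tri (lifted \<theta> \<mu>)
       \<and> stoch_monotone (set_pmf (lifted \<theta> \<mu>)) (glauber (lifted \<theta> \<mu>))"
proof -
  define \<pi> where "\<pi> = lifted \<theta> \<mu>"
  have th': "0 \<le> \<theta>" "\<theta> \<le> 1" using assms by auto
  have MT: "monotone_system_tri \<pi>"
    unfolding monotone_system_tri_def
  proof (intro allI impI)
    fix i \<sigma> \<tau> assume h: "feasible \<pi> i \<sigma> \<and> feasible \<pi> i \<tau> \<and> le_off i \<sigma> \<tau>"
    have s: "feasible \<mu> i (unl \<sigma>)" "cond_marg \<pi> i \<sigma> = tdist (pmf (cond_marg \<mu> i (unl \<sigma>)) True) \<theta>"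
      using cm_lifted[OF assms(2,3), of \<mu> i \<sigma>] h unfolding \<pi>_def by auto
    have t: "feasible \<mu> i (unl \<tau>)" "cond_marg \<pi> i \<tau> = tdist (pmf (cond_marg \<mu> i (unl \<tau>)) True) \<theta>"
      using cm_lifted[OF assms(2,3), of \<mu> i \<tau>] h unfolding \<pi>_def by auto
    have lo: "le_off i (unl \<sigma>) (unl \<tau>)"
    proof -
      have "(\<sigma> u \<noteq> Zero) \<le> (\<tau> u \<noteq> Zero)" if "u \<noteq> i" for u
      proof -
        have "\<sigma> u \<le> \<tau> u" using h that by (auto simp: le_off_def)
        then show ?thesis by (cases "\<sigma> u"; cases "\<tau> u") (auto simp: less_eq_tri_def)
      qed
      then show ?thesis by (auto simp: le_off_def unl_def)
    qed
    have pq: "pmf (cond_marg \<mu> i (unl \<sigma>)) True \<le> pmf (cond_marg \<mu> i (unl \<tau>)) True"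
      using assms(1) s(1) t(1) lo unfolding monotone_system_bin_def by blast
    show "\<exists>c :: (tri \<times> tri) pmf.
            map_pmf fst c = cond_marg \<pi> i \<sigma> \<and> map_pmf snd c = cond_marg \<pi> i \<tau> \<and>
            (\<forall>(x, y) \<in> set_pmf c. x \<le> y)"
      unfolding s(2) t(2) by (rule coupling[OF pmf_nonneg pq pmf_le_1 th'])
  qed
  have SM: "stoch_monotone (set_pmf \<pi>) (glauber \<pi>)"
    unfolding stoch_monotone_def
  proof (intro allI impI ballI)
    fix f :: "('v \<Rightarrow> tri) \<Rightarrow> real" and x y
    assume f: "(\<forall>x\<in>set_pmf \<pi>. 0 \<le> f x) \<and> (\<forall>x\<in>set_pmf \<pi>. \<forall>y\<in>set_pmf \<pi>. x \<le> y \<longrightarrow> f x \<le> f y)"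
      and x: "x \<in> set_pmf \<pi>" and y: "y \<in> set_pmf \<pi>" and xy: "x \<le> y"
    have "\<forall>v. \<exists>c :: (tri \<times> tri) pmf.
            map_pmf fst c = cond_marg \<pi> v x \<and> map_pmf snd c = cond_marg \<pi> v y \<and>
            (\<forall>(a, b) \<in> set_pmf c. a \<le> b)"
    proof
      fix v
      have "le_off v x y" using xy by (auto simp: le_off_def le_fun_def)
      then show "\<exists>c :: (tri \<times> tri) pmf.
            map_pmf fst c = cond_marg \<pi> v x \<and> map_pmf snd c = cond_marg \<pi> v y \<and>
            (\<forall>(a, b) \<in> set_pmf c. a \<le> b)"
        using MT feasible_support[OF x] feasible_support[OF y]
        unfolding monotone_system_tri_def by blast
    qed
    then obtain c where c1: "\<And>v. map_pmf fst (c v) = cond_marg \<pi> v x"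
      and c2: "\<And>v. map_pmf snd (c v) = cond_marg \<pi> v y"
      and c3: "\<And>v. \<forall>(a, b) \<in> set_pmf (c v). a \<le> b" by metis
    define C where "C = bind_pmf (pmf_of_set UNIV) (\<lambda>v. map_pmf (\<lambda>(a, b). (x(v := a), y(v := b))) (c v))"
    have gx: "glauber \<pi> x = map_pmf fst C"
      unfolding glauber_def C_def map_bind_pmf
      by (intro bind_pmf_cong refl) (simp add: c1[symmetric] pmf.map_comp o_def case_prod_beta)
    have gy: "glauber \<pi> y = map_pmf snd C"
      unfolding glauber_def C_def map_bind_pmf
      by (intro bind_pmf_cong refl) (simp add: c2[symmetric] pmf.map_comp o_def case_prod_beta)
    have supp: "f (fst z) \<le> f (snd z)" if z: "z \<in> set_pmf C" for z
    proof -
      from z obtain v a b where ab: "(a, b) \<in> set_pmf (c v)" and zeq: "z = (x(v := a), y(v := b))"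
        unfolding C_def by (auto simp: set_pmf_of_set)
      have "a \<in> set_pmf (cond_marg \<pi> v x)" using ab unfolding c1[symmetric] by force
      then have xa: "x(v := a) \<in> set_pmf \<pi>" by (rule support_update[OF x])
      have "b \<in> set_pmf (cond_marg \<pi> v y)" using ab unfolding c2[symmetric] by force
      then have yb: "y(v := b) \<in> set_pmf \<pi>" by (rule support_update[OF y])
      have "a \<le> b" using c3[of v] ab by auto
      then have "x(v := a) \<le> y(v := b)" using xy by (auto simp: le_fun_def)
      then show ?thesis using f xa yb zeq by auto
    qed
    have fin: "finite (set_pmf C)" by (rule finite_subset[OF subset_UNIV]) simp
    show "measure_pmf.expectation (glauber \<pi> x) f \<le> measure_pmf.expectation (glauber \<pi> y) f"
      unfolding gx gy integral_map_pmf
      by (rule integral_mono_AE[OF integrable_measure_pmf_finite[OF fin] integrable_measure_pmf_finite[OF fin]])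
         (simp add: AE_measure_pmf_iff supp)
  qed
  show ?thesis using MT SM unfolding \<pi>_def by blast
qed

end
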